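(* Let $\alpha\in(0,1]$ and let $\Omega_\alpha\subset\mathbb{C}$ be the bounded open region enclosed by the closed curve $$\beta(t)=1+2^{\alpha}\left(\sin\tfrac{t}{2}\right)^{\alpha}e^{\,i\left(\alpha\frac{\pi}{2}+t\left(1-\frac{\alpha}{2}\right)\right)},\qquad 0\le t\le 2\pi .$$ Then for a real number $\lambda$, $\lambda\in\Omega_\alpha$ if and only if $1-2^{\alpha}<\lambda<1$.
   Context: Equivalently $\beta(t)=1+e^{it}(1-e^{-it})^{\alpha}$ with the principal branch of the power. $\Omega_\alpha$ is the stability region for eigenvalues of the connectivity matrix in linear fractional-order coupled map lattices of order $\alpha$. *)

theory Defs
  imports "HOL-Analysis.Analysis"
begin

definition frac_beta :: "real \<Rightarrow> real \<Rightarrow> complex" where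
  "frac_beta \<alpha> t = 1 + complex_of_real ((2 powr \<alpha>) * (sin (t / 2)) powr \<alpha>)
        * cis (\<alpha> * pi / 2 + t * (1 - \<alpha> / 2))"

definition Omega :: "real \<Rightarrow> complex set" where
  "Omega \<alpha> = inside (frac_beta \<alpha> ` {0..2 * pi})"

end

theory Submission imports Defs begin

definition GG :: "real \<Rightarrow> real \<Rightarrow> real" where
  "GG a s = 2 powr a * sin (max 0 (((1 - a/2) * pi - s) / (2 * (1 - a/2)))) powr a"

definition gf :: "real \<Rightarrow> complex \<Rightarrow> real" where
  "gf a z = cmod (1 - z) - GG a (arccos (Re (1 - z) / cmod (1 - z)))"

lemma arccos_Arg: assumes "w \<noteq> 0" shows "arccos (Re w / cmod w) = \<bar>Arg w\<bar>"
proof -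
  have "Re w / cmod w = cos (Arg w)" using cos_Arg[OF assms] by simp
  moreover have "- pi < Arg w" "Arg w \<le> pi" using Arg_bounded by auto
  ultimately show ?thesis
    by (cases "Arg w \<ge> 0") (auto simp: arccos_cos arccos_cos2)
qed

lemma lemA:
  assumes a: "0 < a" "a \<le> 1" and z: "z \<noteq> 1" and g: "gf a z = 0"
  shows "z \<in> frac_beta a ` {0..2*pi}"
proof -
  define c where "c = 1 - a/2"
  have c: "c > 0" "c < 1" "2 * c * pi = 2*pi - a * pi" using a by (auto simp: c_def algebra_simps)
  define w where "w = 1 - z"
  have w0: "w \<noteq> 0" using z by (simp add: w_def)
  define \<phi> where "\<phi> = Arg w"
  have phb: "- pi < \<phi>" "\<phi> \<le> pi" using Arg_bounded by (auto simp: \<phi>_def)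
  define \<rho> where "\<rho> = cmod w"
  have rho: "\<rho> > 0" using w0 by (simp add: \<rho>_def)
  have rG: "\<rho> = GG a \<bar>\<phi>\<bar>" using g arccos_Arg[OF w0]
    by (simp add: gf_def w_def \<rho>_def \<phi>_def)
  have lt: "\<bar>\<phi>\<bar> < c * pi"
  proof (rule ccontr)
    assume "\<not> ?thesis"
    hence "max 0 ((c * pi - \<bar>\<phi>\<bar>) / (2 * c)) = 0" using c by (auto simp: divide_le_0_iff)
    hence "GG a \<bar>\<phi>\<bar> = 0" by (simp add: GG_def c_def)
    thus False using rG rho by simp
  qed
  define t where "t = (\<phi> + c * pi) / c"
  have t1: "0 \<le> t" using lt c by (auto simp: t_def)
  have tc: "t * c = \<phi> + c * pi" using c by (simp add: t_def)
  hence "t * c \<le> (2 * pi) * c" using lt by (auto simp: abs_less_iff algebra_simps)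
  hence t2: "t \<le> 2 * pi" using c by (simp add: mult_le_cancel_right)
  have sinEq: "sin (t/2) = sin (max 0 ((c * pi - \<bar>\<phi>\<bar>) / (2 * c)))"
  proof -
    have m: "max 0 ((c * pi - \<bar>\<phi>\<bar>) / (2 * c)) = (c * pi - \<bar>\<phi>\<bar>) / (2 * c)"
      using lt c by auto
    show ?thesis
    proof (cases "\<phi> \<ge> 0")
      case True
      have "t/2 = pi - (c * pi - \<bar>\<phi>\<bar>) / (2 * c)" using True c
        by (simp add: t_def field_simps)
      hence "sin (t/2) = sin (pi - (c * pi - \<bar>\<phi>\<bar>) / (2 * c))" by (rule arg_cong)
      also have "\<dots> = sin ((c * pi - \<bar>\<phi>\<bar>) / (2 * c))" by (rule sin_pi_minus)
      finally show ?thesis using m by simp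
    next
      case False
      have "t/2 = (c * pi - \<bar>\<phi>\<bar>) / (2 * c)" using False c
        by (simp add: t_def field_simps)
      hence "sin (t/2) = sin ((c * pi - \<bar>\<phi>\<bar>) / (2 * c))" by (rule arg_cong)
      thus ?thesis using m by simp
    qed
  qed
  have rt: "2 powr a * sin (t/2) powr a = \<rho>" using rG sinEq by (simp add: GG_def c_def)
  have "t * (1 - a/2) = \<phi> + c * pi" using tc by (simp add: c_def)
  hence ang: "a * pi / 2 + t * (1 - a/2) = \<phi> + pi" by (simp add: c_def algebra_simps)
  have cw: "cis \<phi> = w / complex_of_real \<rho>" using cis_Arg[OF w0] by (simp add: \<phi>_def \<rho>_def sgn_div_norm divide_inverse scaleR_conv_of_real mult.commute)
  have "frac_beta a t = 1 + complex_of_real \<rho> * cis (\<phi> + pi)"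
    unfolding frac_beta_def rt ang by simp
  also have "\<dots> = 1 - complex_of_real \<rho> * cis \<phi>" by (simp add: cis_mult[symmetric] )
  also have "\<dots> = z" using rho cw by (simp add: w_def)
  finally show ?thesis using t1 t2 by force
qed

lemma m_bounds: assumes "0 < a" "a \<le> 1" "0 \<le> s"
  shows "0 \<le> sin (max 0 (((1 - a/2) * pi - s) / (2 * (1 - a/2))))"
    "sin (max 0 (((1 - a/2) * pi - s) / (2 * (1 - a/2)))) \<le> 1"
proof -
  let ?m = "max 0 (((1 - a/2) * pi - s) / (2 * (1 - a/2)))"
  have c: "1 - a/2 > 0" using assms by simp
  have "((1 - a/2) * pi - s) / (2 * (1 - a/2)) = pi/2 - s / (2 * (1 - a/2))"
    using c by (simp add: field_simps)
  moreover have "s / (2 * (1 - a/2)) \<ge> 0" using c assms by simp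
  ultimately have m1: "?m \<le> pi/2" using c assms by (simp only: max_def) auto
  have m2: "?m \<ge> 0" by simp
  show "0 \<le> sin ?m" by (rule sin_ge_zero[OF m2]) (use m1 pi_gt_zero in linarith)
  show "sin ?m \<le> 1" by simp
qed

lemma gf_cont: assumes "0 < a" "a \<le> 1" shows "continuous_on (-{1}) (gf a)"
proof -
  have c: "2 * (1 - a/2) \<noteq> 0" using assms by simp
  have b: "\<forall>z\<in>-{1}. -1 \<le> Re (1 - z) / cmod (1 - z) \<and> Re (1 - z) / cmod (1 - z) \<le> 1"
  proof
    fix z :: complex assume "z \<in> -{1}"
    hence "cmod (1 - z) > 0" by auto
    moreover have "\<bar>Re (1 - z)\<bar> \<le> cmod (1 - z)" by (rule abs_Re_le_cmod)
    ultimately show "-1 \<le> Re (1 - z) / cmod (1 - z) \<and> Re (1 - z) / cmod (1 - z) \<le> 1"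
      by (auto simp: divide_le_eq le_divide_eq abs_le_iff)
  qed
  have ca: "continuous_on (-{1}) (\<lambda>z. arccos (Re (1 - z) / cmod (1 - z)))"
    by (intro continuous_intros b) auto
  have cs: "continuous_on (-{1}) (\<lambda>z. sin (max 0 (((1 - a/2) * pi - arccos (Re (1 - z) / cmod (1 - z))) / (2 * (1 - a/2)))))"
    by (intro continuous_intros ca) (use c in auto)
  have cp: "continuous_on (-{1}) (\<lambda>z. sin (max 0 (((1 - a/2) * pi - arccos (Re (1 - z) / cmod (1 - z))) / (2 * (1 - a/2)))) powr a)"
  proof (rule continuous_on_powr'[OF cs continuous_on_const], intro ballI conjI impI)
    fix z :: complex
    let ?m = "max 0 (((1 - a/2) * pi - arccos (Re (1 - z) / cmod (1 - z))) / (2 * (1 - a/2)))"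
    have "arccos (Re (1 - z) / cmod (1 - z)) \<ge> 0" using b arccos_lbound
      by (cases "z = 1") auto
    thus "0 \<le> sin ?m" using m_bounds assms by blast
  qed (use assms in auto)
  show ?thesis unfolding gf_def GG_def
    by (intro continuous_intros cp) auto
qed

lemma lemD:
  assumes a: "0 < a" "a \<le> 1" and t: "0 \<le> t" "t \<le> 2*pi" and im: "Im (frac_beta a t) = 0"
  shows "frac_beta a t = 1 \<or> frac_beta a t = 1 - complex_of_real (2 powr a)"
proof (cases "2 powr a * sin (t/2) powr a = 0")
  case True then show ?thesis by (simp add: frac_beta_def)
next
  case False
  define \<theta> where "\<theta> = a * pi / 2 + t * (1 - a/2)"
  have "Im (frac_beta a t) = (2 powr a * sin (t/2) powr a) * sin \<theta>"
    by (simp add: frac_beta_def \<theta>_def)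
  hence "sin \<theta> = 0" using im False by simp
  then obtain i :: int where i: "\<theta> = of_int i * pi" by (auto simp: sin_zero_iff_int2)
  have th1: "\<theta> > 0" using a t by (simp add: \<theta>_def add_pos_nonneg)
  have "t * (1 - a/2) \<le> 2 * pi * (1 - a/2)" using a t by (intro mult_right_mono) auto
  moreover have "pi * a > 0" using a by simp
  moreover have "2 * pi * (1 - a/2) = 2 * pi - a * pi" by (simp add: algebra_simps)
  ultimately have th2: "\<theta> < 2 * pi" unfolding \<theta>_def by (simp only: mult.commute[of pi a], linarith?)
  have "of_int i * pi > 0" "of_int i * pi < 2 * pi" using th1 th2 i by auto
  hence "real_of_int i > 0" "real_of_int i < 2" by (auto simp: zero_less_mult_iff)
  hence "i = 1" by linarith
  hence "\<theta> = pi" using i by simp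
  hence "t * (1 - a/2) = pi * (1 - a/2)" by (simp add: \<theta>_def algebra_simps)
  hence tp: "t = pi" using a by simp
  have "a * pi / 2 + pi * (1 - a/2) = pi" by (simp add: algebra_simps)
  thus ?thesis by (simp add: frac_beta_def tp)
qed

lemma gf_neg: assumes a: "0 < a" "a \<le> 1" and x: "1 - 2 powr a < x" "x < 1"
  shows "gf a (complex_of_real x) < 0"
proof -
  have e: "1 - complex_of_real x = complex_of_real (1 - x)" by simp
  have "((1 - a/2) * pi - 0) / (2 * (1 - a/2)) = pi/2" using a by (simp add: field_simps)
  hence h: "max 0 (((1 - a/2) * pi - 0) / (2 * (1 - a/2))) = pi/2" by (simp only:) (simp add: max_def)
  have "GG a 0 = 2 powr a" unfolding GG_def h by simp
  thus ?thesis using x by (simp add: gf_def e del: of_real_diff)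
qed

lemma gf_bound: assumes a: "0 < a" "a \<le> 1" and g: "gf a z < 0"
  shows "cmod (1 - z) \<le> 2 powr a"
proof -
  have "GG a s \<le> 2 powr a" if s: "0 \<le> s" for s
  proof -
    let ?m = "max 0 (((1 - a/2) * pi - s) / (2 * (1 - a/2)))"
    have "sin ?m powr a \<le> 1"
    proof -
      have "sin ?m powr a \<le> 1 powr a" using a m_bounds[OF a s] by (intro powr_mono2) auto
      thus ?thesis by simp
    qed
    thus ?thesis unfolding GG_def by (simp add: mult_left_le)
  qed
  moreover have "0 \<le> arccos (Re (1 - z) / cmod (1 - z))"
  proof -
    have "\<bar>Re (1 - z)\<bar> \<le> cmod (1 - z)" by (rule abs_Re_le_cmod)
    hence "-1 \<le> Re (1 - z) / cmod (1 - z) \<and> Re (1 - z) / cmod (1 - z) \<le> 1"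
      by (cases "cmod (1 - z) = 0") (auto simp: divide_le_eq le_divide_eq abs_le_iff)
    thus ?thesis using arccos_lbound by blast
  qed
  ultimately show ?thesis using g unfolding gf_def by (smt (verit))
qed

theorem mainTheorem2:
  fixes \<alpha> x :: real
  assumes "0 < \<alpha>" and "\<alpha> \<le> 1"
  shows "complex_of_real x \<in> Omega \<alpha> \<longleftrightarrow> 1 - 2 powr \<alpha> < x \<and> x < 1"
proof -
  note a = assms
  define S where "S = frac_beta \<alpha> ` {0..2*pi}"
  have one: "1 \<in> S"
  proof -
    have "frac_beta \<alpha> 0 = 1" using a by (simp add: frac_beta_def)
    thus ?thesis unfolding S_def by force
  qed
  have two: "complex_of_real (1 - 2 powr \<alpha>) \<in> S"
  proof -
    have e: "\<alpha> * pi / 2 + pi * (1 - \<alpha>/2) = pi" by (simp add: algebra_simps)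
    have "frac_beta \<alpha> pi = complex_of_real (1 - 2 powr \<alpha>)" by (simp add: frac_beta_def e)
    moreover have "pi \<in> {0..2*pi}" by simp
    ultimately show ?thesis unfolding S_def by (metis image_eqI)
  qed
  have realS: "y = 1 \<or> y = 1 - 2 powr \<alpha>" if yS: "complex_of_real y \<in> S" for y
  proof -
    obtain t where t: "t \<in> {0..2*pi}" "complex_of_real y = frac_beta \<alpha> t"
      using yS unfolding S_def by blast
    have "Im (frac_beta \<alpha> t) = 0" using t(2) by (metis Im_complex_of_real)
    hence "frac_beta \<alpha> t = 1 \<or> frac_beta \<alpha> t = 1 - complex_of_real (2 powr \<alpha>)"
      using lemD[OF a] t(1) by auto
    thus ?thesis using t(2) by (metis of_real_1 of_real_diff of_real_eq_iff)
  qed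
  have ray: "\<not> bounded (connected_component_set (-S) (complex_of_real x))"
    if T: "connected T" "T \<subseteq> -S" "complex_of_real x \<in> T" "\<not> bounded T" for T
  proof -
    have "T \<subseteq> connected_component_set (-S) (complex_of_real x)"
      by (rule connected_component_maximal[OF T(3) T(1) T(2)])
    thus ?thesis using T(4) bounded_subset by blast
  qed
  have Om: "Omega \<alpha> = inside S" by (simp add: Omega_def S_def)
  show ?thesis
  proof
    assume ins: "complex_of_real x \<in> Omega \<alpha>"
    hence xS: "complex_of_real x \<notin> S" and bd: "bounded (connected_component_set (-S) (complex_of_real x))"
      unfolding Om inside_def by auto
    show "1 - 2 powr \<alpha> < x \<and> x < 1"
    proof (rule ccontr)
      assume nx: "\<not> (1 - 2 powr \<alpha> < x \<and> x < 1)"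
      have p: "2 powr \<alpha> > 0" by simp
      show False
      proof (cases "x \<ge> 1")
        case True
        hence x1: "x > 1" using xS one by (metis of_real_1 order_le_less)
        define T where "T = complex_of_real ` {x..}"
        have "connected T" unfolding T_def
          by (intro connected_continuous_image continuous_intros) simp
        moreover have "T \<subseteq> -S" using realS x1 p unfolding T_def by fastforce
        moreover have "complex_of_real x \<in> T" unfolding T_def by simp
        moreover have "\<not> bounded T"
        proof
          assume "bounded T"
          then obtain B where B: "\<forall>z\<in>T. norm z \<le> B" by (auto simp: bounded_iff)
          have "complex_of_real (max x (\<bar>B\<bar> + 1)) \<in> T" unfolding T_def by simp
          with B have "norm (complex_of_real (max x (\<bar>B\<bar> + 1))) \<le> B" by blast
          thus False by (simp add: abs_if split: if_splits)
        qed
        ultimately show False using ray bd by blast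
      next
        case False
        hence x1: "x < 1 - 2 powr \<alpha>" using nx xS two by (metis order_le_less not_le)
        define T where "T = complex_of_real ` {..x}"
        have "connected T" unfolding T_def
          by (intro connected_continuous_image continuous_intros) simp
        moreover have "T \<subseteq> -S" using realS x1 p unfolding T_def by fastforce
        moreover have "complex_of_real x \<in> T" unfolding T_def by simp
        moreover have "\<not> bounded T"
        proof
          assume "bounded T"
          then obtain B where B: "\<forall>z\<in>T. norm z \<le> B" by (auto simp: bounded_iff)
          have "complex_of_real (min x (- \<bar>B\<bar> - 1)) \<in> T" unfolding T_def by simp
          with B have "norm (complex_of_real (min x (- \<bar>B\<bar> - 1))) \<le> B" by blast
          thus False by (simp add: abs_if split: if_splits)
        qed
        ultimately show False using ray bd by blast
      qed
    qed
  next
    assume x: "1 - 2 powr \<alpha> < x \<and> x < 1"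
    have xS: "complex_of_real x \<notin> S" using realS x by fastforce
    define C where "C = connected_component_set (-S) (complex_of_real x)"
    have Cc: "connected C" unfolding C_def by simp
    have CS: "C \<subseteq> -S" unfolding C_def by (rule connected_component_subset)
    have xC: "complex_of_real x \<in> C" unfolding C_def using xS by simp
    have C1: "C \<subseteq> -{1}" using CS one by auto
    have gc: "continuous_on C (gf \<alpha>)" using gf_cont[OF a] C1 continuous_on_subset by blast
    have gnz: "gf \<alpha> z \<noteq> 0" if "z \<in> C" for z
      using lemA[OF a] that C1 CS unfolding S_def by blast
    have gx: "gf \<alpha> (complex_of_real x) < 0" using gf_neg[OF a] x by blast
    have neg: "gf \<alpha> z < 0" if z: "z \<in> C" for z
    proof (rule ccontr)
      assume "\<not> gf \<alpha> z < 0"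
      hence gz: "gf \<alpha> z > 0" using gnz[OF z] by linarith
      have "connected (gf \<alpha> ` C)" by (rule connected_continuous_image[OF gc Cc])
      moreover have "gf \<alpha> (complex_of_real x) \<in> gf \<alpha> ` C" "gf \<alpha> z \<in> gf \<alpha> ` C" using xC z by auto
      ultimately have "0 \<in> gf \<alpha> ` C" using gx gz unfolding connected_iff_interval
        by (meson less_imp_le)
      thus False using gnz by auto
    qed
    have "C \<subseteq> cball 1 (2 powr \<alpha>)"
      using gf_bound[OF a] neg by (auto simp: dist_norm)
    hence "bounded C" using bounded_cball bounded_subset by blast
    thus "complex_of_real x \<in> Omega \<alpha>" unfolding Om inside_def C_def using xS by simp
  qed
qed

end
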